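(* Let $d\ge 2$ and let $D\subset T_d$ be a domain with $|D|\ge 2$ and $|D|\equiv 2\pmod{d-1}$. Then $D$ is optimal if and only if $D$ is full.
   Context: $T_d$ is the $d$-regular tree (connected, acyclic, every vertex of degree $d$). A domain is a finite nonempty connected set $D$ of vertices of $T_d$, identified with its induced subgraph. For $x\in D$, $\deg_D(x)$ is the number of neighbours of $x$ lying in $D$. The (inner vertex) boundary is $\partial D=\{x\in D:\deg_D(x)<d\}$. For $k\ge1$, $I_d(k)=\min\{|\partial D| : D\subset T_d \text{ a domain with } |D|=k\}$, and $D$ is optimal if $|\partial D|=I_d(|D|)$. For $|D|\ge2$, $R(D)=\{x\in\partial D: 2\le \deg_D(x)\le d-1\}$ and $D$ is full if $R(D)=\emptyset$. *)

theory Defs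
  imports Main
begin

text \<open>Model of the d-regular tree T_d: vertices are reduced words over the alphabet
{0..<d} (no two consecutive letters equal), i.e. the Cayley graph of the free product of
d copies of Z/2. A word w is adjacent to w@[a] (a a letter different from the last
letter of w). Every vertex has exactly d neighbours (for d >= 2).\<close>

definition tvert :: "nat \<Rightarrow> nat list \<Rightarrow> bool" where
  "tvert d w \<longleftrightarrow> set w \<subseteq> {..<d} \<and> (\<forall>i. Suc i < length w \<longrightarrow> w ! i \<noteq> w ! Suc i)"

definition tadj :: "nat \<Rightarrow> nat list \<Rightarrow> nat list \<Rightarrow> bool" where
  "tadj d u v \<longleftrightarrow> tvert d u \<and> tvert d v \<and> (\<exists>a. v = u @ [a] \<or> u = v @ [a])"

definition is_domain :: "nat \<Rightarrow> nat list set \<Rightarrow> bool" where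
  "is_domain d D \<longleftrightarrow> finite D \<and> D \<noteq> {} \<and> (\<forall>x\<in>D. tvert d x) \<and>
     (\<forall>x\<in>D. \<forall>y\<in>D. (x, y) \<in> {(u, v). u \<in> D \<and> v \<in> D \<and> tadj d u v}\<^sup>*)"

definition degD :: "nat \<Rightarrow> nat list set \<Rightarrow> nat list \<Rightarrow> nat" where
  "degD d D x = card {y \<in> D. tadj d x y}"

definition bdry :: "nat \<Rightarrow> nat list set \<Rightarrow> nat list set" where
  "bdry d D = {x \<in> D. degD d D x < d}"

definition Iso :: "nat \<Rightarrow> nat \<Rightarrow> nat" where
  "Iso d k = Min {card (bdry d D) | D. is_domain d D \<and> card D = k}"

definition optimal :: "nat \<Rightarrow> nat list set \<Rightarrow> bool" where
  "optimal d D \<longleftrightarrow> card (bdry d D) = Iso d (card D)"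

definition Rset :: "nat \<Rightarrow> nat list set \<Rightarrow> nat list set" where
  "Rset d D = {x \<in> bdry d D. 2 \<le> degD d D x \<and> degD d D x \<le> d - 1}"

definition full :: "nat \<Rightarrow> nat list set \<Rightarrow> bool" where
  "full d D \<longleftrightarrow> Rset d D = {}"

end

theory Submission
  imports Defs
begin

lemma tvert_snoc:
  assumes "tvert d (x @ [a])"
  shows "tvert d x \<and> a < d \<and> (x \<noteq> [] \<longrightarrow> a \<noteq> last x)"
proof -
  have s: "set (x@[a]) \<subseteq> {..<d}" and c: "\<And>i. Suc i < length (x@[a]) \<Longrightarrow> (x@[a]) ! i \<noteq> (x@[a]) ! Suc i"
    using assms unfolding tvert_def by auto
  have 1: "tvert d x" unfolding tvert_def
  proof
    show "set x \<subseteq> {..<d}" using s by auto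
    show "\<forall>i. Suc i < length x \<longrightarrow> x ! i \<noteq> x ! Suc i"
    proof (intro allI impI)
      fix i assume "Suc i < length x"
      then show "x ! i \<noteq> x ! Suc i" using c[of i] by (simp add: nth_append)
    qed
  qed
  have 2: "a < d" using s by auto
  have 3: "a \<noteq> last x" if "x \<noteq> []"
  proof -
    have e: "Suc (length x - 1) = length x" using that by simp
    have "Suc (length x - 1) < length (x@[a])" using that by simp
    from c[OF this] that e show ?thesis by (simp add: nth_append last_conv_nth)
  qed
  show ?thesis using 1 2 3 by blast
qed

lemma tvert_snocI:
  assumes "tvert d x" "a < d" "x \<noteq> [] \<longrightarrow> a \<noteq> last x"
  shows "tvert d (x @ [a])"
  unfolding tvert_def
proof
  show "set (x @ [a]) \<subseteq> {..<d}" using assms unfolding tvert_def by auto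
  show "\<forall>i. Suc i < length (x @ [a]) \<longrightarrow> (x @ [a]) ! i \<noteq> (x @ [a]) ! Suc i"
  proof (intro allI impI)
    fix i assume i: "Suc i < length (x @ [a])"
    show "(x @ [a]) ! i \<noteq> (x @ [a]) ! Suc i"
    proof (cases "Suc i < length x")
      case True then show ?thesis using assms(1) unfolding tvert_def by (simp add: nth_append)
    next
      case False
      then have e: "i = length x - 1" "x \<noteq> []" using i by auto
      then have "(x @ [a]) ! i = last x" by (simp add: nth_append last_conv_nth)
      moreover have "(x @ [a]) ! Suc i = a" using e by (simp add: nth_append)
      ultimately show ?thesis using assms(3) e by simp
    qed
  qed
qed

definition rooted :: "nat list set \<Rightarrow> nat list \<Rightarrow> bool" where
  "rooted D r \<longleftrightarrow> r \<in> D \<and> (\<forall>v\<in>D. length r \<le> length v \<and> take (length r) v = r \<and>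
      (\<forall>i. length r \<le> i \<longrightarrow> i \<le> length v \<longrightarrow> take i v \<in> D))"

lemma domain_root:
  assumes "is_domain d D"
  shows "\<exists>r. rooted D r"
proof -
  from assms have ne: "D \<noteq> {}"
    and con: "\<forall>x\<in>D. \<forall>y\<in>D. (x, y) \<in> {(u, v). u \<in> D \<and> v \<in> D \<and> tadj d u v}\<^sup>*"
    unfolding is_domain_def by auto
  obtain r0 where "r0 \<in> D" using ne by auto
  then obtain r where rD: "r \<in> D" and rmin: "\<And>v. v \<in> D \<Longrightarrow> length r \<le> length v"
    using ex_has_least_nat[of "\<lambda>x. x \<in> D" r0 length] by auto
  have key: "v \<in> D \<and> take (length r) v = r \<and> (\<forall>i. length r \<le> i \<longrightarrow> i \<le> length v \<longrightarrow> take i v \<in> D)"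
    if "(r, v) \<in> {(u, v). u \<in> D \<and> v \<in> D \<and> tadj d u v}\<^sup>*" for v
    using that
  proof (induction rule: rtrancl_induct)
    case base
    then show ?case using rD by (auto simp: le_antisym)
  next
    case (step y z)
    from step.hyps(2) have yD: "y \<in> D" and zD: "z \<in> D" and adj: "tadj d y z" by auto
    from adj obtain a where "z = y @ [a] \<or> y = z @ [a]" unfolding tadj_def by auto
    then show ?case
    proof
      assume z: "z = y @ [a]"
      have ly: "length r \<le> length y" using rmin yD .
      have "take (length r) z = r" using step.IH ly z by simp
      moreover have "take i z \<in> D" if "length r \<le> i" "i \<le> length z" for i
      proof (cases "i \<le> length y")
        case True then show ?thesis using step.IH that z by simp
      next
        case False then have "i = length z" using that z by simp
        then show ?thesis using zD by simp
      qed
      ultimately show ?case using zD by blast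
    next
      assume y: "y = z @ [a]"
      have lz: "length r \<le> length z" using rmin zD .
      have "take (length r) z = r" using step.IH lz y by simp
      moreover have "take i z \<in> D" if "length r \<le> i" "i \<le> length z" for i
      proof -
        have "i \<le> length y" using that y by simp
        then have "take i y \<in> D" using step.IH that by blast
        moreover have "take i y = take i z" using that y by simp
        ultimately show ?thesis by simp
      qed
      ultimately show ?case using zD by blast
    qed
  qed
  have "rooted D r" unfolding rooted_def using key con rD rmin by blast
  then show ?thesis by blast
qed


lemma rooted_nonroot:
  assumes "rooted D r" "x \<in> D" "x \<noteq> r"
  shows "x \<noteq> [] \<and> butlast x \<in> D \<and> length r < length x"
proof -
  have a: "length r \<le> length x" "take (length r) x = r"
    and c: "\<And>i. length r \<le> i \<Longrightarrow> i \<le> length x \<Longrightarrow> take i x \<in> D"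
    using assms(1,2) unfolding rooted_def by auto
  have lt: "length r < length x"
  proof (rule ccontr)
    assume "\<not> ?thesis"
    then have "length x \<le> length r" by simp
    then have "take (length r) x = x" by simp
    then show False using a assms(3) by simp
  qed
  have "butlast x = take (length x - 1) x" by (simp add: butlast_conv_take)
  moreover have "take (length x - 1) x \<in> D" using c lt by simp
  ultimately show ?thesis using lt by auto
qed

lemma nbrs_split:
  assumes "is_domain d D" "x \<in> D"
  shows "{y \<in> D. tadj d x y} = {y \<in> D. y \<noteq> [] \<and> butlast y = x} \<union> {y \<in> D. x \<noteq> [] \<and> y = butlast x}"
proof -
  have tv: "\<And>z. z \<in> D \<Longrightarrow> tvert d z" using assms(1) unfolding is_domain_def by auto
  show ?thesis
  proof (intro set_eqI iffI)
    fix y assume "y \<in> {y \<in> D. tadj d x y}"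
    then have yD: "y \<in> D" and "\<exists>a. y = x @ [a] \<or> x = y @ [a]" unfolding tadj_def by auto
    then obtain a where "y = x @ [a] \<or> x = y @ [a]" by blast
    then show "y \<in> {y \<in> D. y \<noteq> [] \<and> butlast y = x} \<union> {y \<in> D. x \<noteq> [] \<and> y = butlast x}"
      using yD by auto
  next
    fix y assume "y \<in> {y \<in> D. y \<noteq> [] \<and> butlast y = x} \<union> {y \<in> D. x \<noteq> [] \<and> y = butlast x}"
    then have yD: "y \<in> D" and h: "(y \<noteq> [] \<and> butlast y = x) \<or> (x \<noteq> [] \<and> y = butlast x)" by auto
    from h have "\<exists>a. y = x @ [a] \<or> x = y @ [a]"
      by (metis append_butlast_last_id)
    then show "y \<in> {y \<in> D. tadj d x y}" using yD tv assms(2) unfolding tadj_def by auto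
  qed
qed

lemma deg_formula:
  assumes dom: "is_domain d D" and rt: "rooted D r" and xD: "x \<in> D"
  shows "degD d D x = card {y \<in> D. y \<noteq> [] \<and> butlast y = x} + (if x = r then 0 else 1)"
proof -
  have fin: "finite D" using dom unfolding is_domain_def by auto
  have disj: "{y \<in> D. y \<noteq> [] \<and> butlast y = x} \<inter> {y \<in> D. x \<noteq> [] \<and> y = butlast x} = {}"
  proof (rule ccontr)
    assume "\<not> ?thesis"
    then obtain y where h: "y \<noteq> []" "butlast y = x" "x \<noteq> []" "y = butlast x" by auto
    have "length x = length y - 1" "length y = length x - 1" "length y > 0" "length x > 0"
      using h(2) apply (metis length_butlast)
      using h(4) apply (metis length_butlast)
      using h(1) apply simp
      using h(3) apply simp
      done
    then show False by arith
  qed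
  have P: "card {y \<in> D. x \<noteq> [] \<and> y = butlast x} = (if x = r then 0 else 1)"
  proof (cases "x = r")
    case True
    have "{y \<in> D. x \<noteq> [] \<and> y = butlast x} = {}"
    proof (rule ccontr)
      assume "\<not> ?thesis"
      then obtain y where "y \<in> D" "x \<noteq> []" "y = butlast x" by auto
      moreover have "length r \<le> length y" using rt \<open>y \<in> D\<close> unfolding rooted_def by auto
      ultimately show False using True by (cases x) auto
    qed
    then show ?thesis using True by simp
  next
    case False
    then have "x \<noteq> [] \<and> butlast x \<in> D" using rooted_nonroot[OF rt xD] by auto
    then have "{y \<in> D. x \<noteq> [] \<and> y = butlast x} = {butlast x}" by auto
    then show ?thesis using False by simp
  qed
  have "degD d D x = card ({y \<in> D. y \<noteq> [] \<and> butlast y = x} \<union> {y \<in> D. x \<noteq> [] \<and> y = butlast x})"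
    unfolding degD_def using nbrs_split[OF dom xD] by simp
  also have "\<dots> = card {y \<in> D. y \<noteq> [] \<and> butlast y = x} + card {y \<in> D. x \<noteq> [] \<and> y = butlast x}"
    by (rule card_Un_disjoint) (use fin disj in auto)
  finally show ?thesis using P by simp
qed

lemma deg_sum:
  assumes dom: "is_domain d D"
  shows "sum (degD d D) D = 2 * (card D - 1)"
proof -
  obtain r where rt: "rooted D r" using domain_root[OF dom] by blast
  have fin: "finite D" using dom unfolding is_domain_def by auto
  have rD: "r \<in> D" using rt unfolding rooted_def by auto
  have C: "{y \<in> D. y \<noteq> [] \<and> butlast y = x} = {y. y \<in> D - {r} \<and> butlast y = x}" if "x \<in> D" for x
  proof (intro set_eqI iffI)
    fix y assume "y \<in> {y \<in> D. y \<noteq> [] \<and> butlast y = x}"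
    then have y: "y \<in> D" "y \<noteq> []" "butlast y = x" by auto
    have "y \<noteq> r"
    proof
      assume "y = r"
      moreover have "length r \<le> length x" using rt that unfolding rooted_def by auto
      moreover have "length x = length y - 1" "length y > 0" using y by (metis length_butlast, simp)
      ultimately show False by arith
    qed
    then show "y \<in> {y. y \<in> D - {r} \<and> butlast y = x}" using y by auto
  next
    fix y assume "y \<in> {y. y \<in> D - {r} \<and> butlast y = x}"
    then show "y \<in> {y \<in> D. y \<noteq> [] \<and> butlast y = x}" using rooted_nonroot[OF rt] by auto
  qed
  have img: "butlast ` (D - {r}) \<subseteq> D" using rooted_nonroot[OF rt] by auto
  have s1: "(\<Sum>x\<in>D. card {y \<in> D. y \<noteq> [] \<and> butlast y = x}) = card (D - {r})"
  proof -
    have "(\<Sum>x\<in>D. card {y \<in> D. y \<noteq> [] \<and> butlast y = x}) = (\<Sum>x\<in>D. \<Sum>y\<in>{y. y \<in> D - {r} \<and> butlast y = x}. (1::nat))"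
      using C fin by (intro sum.cong) auto
    also have "\<dots> = (\<Sum>y\<in>D - {r}. (1::nat))"
      by (rule sum.group) (use fin img in auto)
    finally show ?thesis by simp
  qed
  have s2: "(\<Sum>x\<in>D. (if x = r then 0 else 1::nat)) = card (D - {r})"
  proof -
    have "(\<Sum>x\<in>D. (if x = r then 0 else 1::nat)) = (if r = r then 0 else 1) + (\<Sum>x\<in>D - {r}. (if x = r then 0 else 1::nat))"
      using sum.remove[OF fin rD] by blast
    also have "\<dots> = (\<Sum>x\<in>D - {r}. (1::nat))" by simp
    finally show ?thesis by simp
  qed
  have "sum (degD d D) D = (\<Sum>x\<in>D. card {y \<in> D. y \<noteq> [] \<and> butlast y = x} + (if x = r then 0 else 1))"
    using deg_formula[OF dom rt] by (intro sum.cong) auto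
  also have "\<dots> = card (D - {r}) + card (D - {r})" by (simp add: sum.distrib s1 s2)
  finally show ?thesis using rD fin by simp
qed


lemma deg_pos:
  assumes dom: "is_domain d D" and k: "2 \<le> card D" and xD: "x \<in> D"
  shows "1 \<le> degD d D x"
proof -
  obtain r where rt: "rooted D r" using domain_root[OF dom] by blast
  have fin: "finite D" using dom unfolding is_domain_def by auto
  have rD: "r \<in> D" using rt unfolding rooted_def by auto
  show ?thesis
  proof (cases "x = r")
    case False then show ?thesis using deg_formula[OF dom rt xD] by simp
  next
    case True
    have "card (D - {r}) \<ge> 1" using k fin rD by simp
    then have "D - {r} \<noteq> {}" by (metis card.empty not_one_le_zero)
    then obtain v where vD: "v \<in> D" and vr: "v \<noteq> r" by auto
    have lt: "length r < length v" using rooted_nonroot[OF rt vD vr] by simp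
    define w where "w = take (Suc (length r)) v"
    have wD: "w \<in> D" using rt vD lt unfolding rooted_def w_def by auto
    have wne: "w \<noteq> []" using lt unfolding w_def by (cases v) auto
    have "butlast w = take (length r) v" unfolding w_def using lt by (simp add: butlast_take)
    also have "\<dots> = r" using rt vD unfolding rooted_def by auto
    finally have "w \<in> {y \<in> D. y \<noteq> [] \<and> butlast y = x}" using wD wne True by simp
    moreover have "finite {y \<in> D. y \<noteq> [] \<and> butlast y = x}" using fin by simp
    ultimately have "{y \<in> D. y \<noteq> [] \<and> butlast y = x} \<noteq> {} \<and> finite {y \<in> D. y \<noteq> [] \<and> butlast y = x}"
      by blast
    then have "card {y \<in> D. y \<noteq> [] \<and> butlast y = x} > 0" by (subst card_gt_0_iff) assumption
    then have "card {y \<in> D. y \<noteq> [] \<and> butlast y = x} \<ge> 1" by simp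
    then show ?thesis using deg_formula[OF dom rt xD] by simp
  qed
qed

lemma deg_le:
  assumes dom: "is_domain d D" and xD: "x \<in> D"
  shows "degD d D x \<le> d"
proof -
  obtain r where rt: "rooted D r" using domain_root[OF dom] by blast
  have fin: "finite D" using dom unfolding is_domain_def by auto
  have tv: "\<And>z. z \<in> D \<Longrightarrow> tvert d z" using dom unfolding is_domain_def by auto
  define A where "A = {a. a < d \<and> (x \<noteq> [] \<longrightarrow> a \<noteq> last x)}"
  have sub: "{y \<in> D. y \<noteq> [] \<and> butlast y = x} \<subseteq> (\<lambda>a. x @ [a]) ` A"
  proof
    fix y assume "y \<in> {y \<in> D. y \<noteq> [] \<and> butlast y = x}"
    then have y: "y \<in> D" "y \<noteq> []" "butlast y = x" by auto
    then have e: "y = x @ [last y]" by (metis append_butlast_last_id)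
    have "tvert d (x @ [last y])" using tv[OF y(1)] e by simp
    then have "last y \<in> A" unfolding A_def using tvert_snoc by blast
    then show "y \<in> (\<lambda>a. x @ [a]) ` A" using e by blast
  qed
  have finA: "finite A" unfolding A_def by simp
  have cC: "card {y \<in> D. y \<noteq> [] \<and> butlast y = x} \<le> card A"
    using card_mono[OF finite_imageI[OF finA] sub] card_image_le[OF finA, of "\<lambda>a. x @ [a]"] by (rule le_trans)
  show ?thesis
  proof (cases "x = []")
    case True
    have "length r \<le> length x" using rt xD unfolding rooted_def by auto
    then have "x = r" using True by simp
    moreover have "A = {..<d}" unfolding A_def using True by auto
    then have "card A \<le> d" by simp
    ultimately show ?thesis using deg_formula[OF dom rt xD] cC by simp
  next
    case False
    have "last x \<in> set x" using False by simp
    then have lx: "last x < d" using tv[OF xD] unfolding tvert_def by auto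
    have "A = {..<d} - {last x}" unfolding A_def using False by auto
    then have "card A = d - 1" using lx by simp
    have "degD d D x \<le> card {y \<in> D. y \<noteq> [] \<and> butlast y = x} + 1"
      using deg_formula[OF dom rt xD] by simp
    then show ?thesis using cC lx \<open>card A = d - 1\<close> by linarith
  qed
qed

lemma count_lemma:
  assumes d: "d \<ge> 2" and dom: "is_domain d D" and k: "2 \<le> card D"
  shows "card D - 2 = (d - 1) * card (D - bdry d D) + sum (\<lambda>x. degD d D x - 1) (bdry d D)"
    and "full d D \<longleftrightarrow> sum (\<lambda>x. degD d D x - 1) (bdry d D) = 0"
proof -
  have fin: "finite D" using dom unfolding is_domain_def by auto
  have "sum (degD d D) D = sum (\<lambda>x. degD d D x - 1 + 1) D"
  proof (intro sum.cong refl)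
    fix x assume "x \<in> D"
    then have "1 \<le> degD d D x" by (rule deg_pos[OF dom k])
    then show "degD d D x = degD d D x - 1 + 1" by simp
  qed
  also have "\<dots> = sum (\<lambda>x. degD d D x - 1) D + card D" unfolding sum.distrib by simp
  finally have s: "sum (\<lambda>x. degD d D x - 1) D = card D - 2" using deg_sum[OF dom] k by simp
  have bsub: "bdry d D \<subseteq> D" unfolding bdry_def by auto
  have "sum (\<lambda>x. degD d D x - 1) D = sum (\<lambda>x. degD d D x - 1) (D - bdry d D) + sum (\<lambda>x. degD d D x - 1) (bdry d D)"
    using sum.subset_diff[OF bsub fin] by simp
  moreover have "sum (\<lambda>x. degD d D x - 1) (D - bdry d D) = sum (\<lambda>x. d - 1) (D - bdry d D)"
  proof (intro sum.cong refl)
    fix x assume "x \<in> D - bdry d D"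
    then have "x \<in> D" "\<not> degD d D x < d" unfolding bdry_def by auto
    then have "degD d D x = d" using deg_le[OF dom] by fastforce
    then show "degD d D x - 1 = d - 1" by simp
  qed
  ultimately show "card D - 2 = (d - 1) * card (D - bdry d D) + sum (\<lambda>x. degD d D x - 1) (bdry d D)"
    using s by (simp add: mult.commute)
  have finb: "finite (bdry d D)" using bsub fin finite_subset by blast
  have "sum (\<lambda>x. degD d D x - 1) (bdry d D) = 0 \<longleftrightarrow> (\<forall>x\<in>bdry d D. degD d D x - 1 = 0)"
    using sum_eq_0_iff[OF finb, of "\<lambda>x. degD d D x - 1"] by blast
  also have "\<dots> \<longleftrightarrow> Rset d D = {}"
  proof
    assume h: "\<forall>x\<in>bdry d D. degD d D x - 1 = 0"
    show "Rset d D = {}" unfolding Rset_def using h by auto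
  next
    assume h: "Rset d D = {}"
    show "\<forall>x\<in>bdry d D. degD d D x - 1 = 0"
    proof
      fix x assume xb: "x \<in> bdry d D"
      then have "degD d D x < d" unfolding bdry_def by auto
      then have "degD d D x \<le> d - 1" by arith
      then have "\<not> 2 \<le> degD d D x" using h xb unfolding Rset_def by auto
      then show "degD d D x - 1 = 0" by arith
    qed
  qed
  finally show "full d D \<longleftrightarrow> sum (\<lambda>x. degD d D x - 1) (bdry d D) = 0" unfolding full_def by simp
qed


lemma construct:
  assumes d: "d \<ge> 2"
  shows "\<exists>D x. is_domain d D \<and> card D = 2 + j * (d - 1) \<and> j \<le> card (D - bdry d D) \<and>
     x \<in> D \<and> x \<noteq> [] \<and> butlast x \<in> D \<and> (\<forall>y\<in>D. length y \<le> length x)"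
proof (induction j)
  case 0
  let ?D = "{[], [0::nat]}"
  have tv: "tvert d []" "tvert d [0]" using d unfolding tvert_def by auto
  have adj: "tadj d [] [0]" "tadj d [0] []" using tv unfolding tadj_def by auto
  let ?E = "{(u, v). u \<in> ?D \<and> v \<in> ?D \<and> tadj d u v}"
  have e1: "([], [0]) \<in> ?E\<^sup>*" using adj by (intro r_into_rtrancl) auto
  have e2: "([0], []) \<in> ?E\<^sup>*" using adj by (intro r_into_rtrancl) auto
  have con: "\<forall>x\<in>?D. \<forall>y\<in>?D. (x, y) \<in> ?E\<^sup>*" using e1 e2 by auto
  have dom: "is_domain d ?D" unfolding is_domain_def using tv con by auto
  show ?case
    by (rule exI[of _ ?D], rule exI[of _ "[0]"]) (use dom in auto)
next
  case (Suc j)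
  then obtain D x where dom: "is_domain d D" and cD: "card D = 2 + j*(d-1)"
    and jI: "j \<le> card (D - bdry d D)" and xD: "x \<in> D" and xne: "x \<noteq> []"
    and pD: "butlast x \<in> D" and lmax: "\<forall>y\<in>D. length y \<le> length x" by blast
  have fin: "finite D" and tv: "\<forall>z\<in>D. tvert d z"
    and con: "\<forall>u\<in>D. \<forall>v\<in>D. (u, v) \<in> {(u, v). u \<in> D \<and> v \<in> D \<and> tadj d u v}\<^sup>*"
    using dom unfolding is_domain_def by auto
  have "last x \<in> set x" using xne by simp
  then have lx: "last x < d" using tv xD unfolding tvert_def by auto
  define A where "A = {..<d} - {last x}"
  define N where "N = (\<lambda>a. x @ [a]) ` A"
  define D' where "D' = D \<union> N"
  have cA: "card A = d - 1" unfolding A_def using lx by simp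
  have inj: "inj_on (\<lambda>a. x @ [a]) A" by (auto simp: inj_on_def)
  have cN: "card N = d - 1" unfolding N_def using card_image[OF inj] cA by simp
  have finN: "finite N" unfolding N_def A_def by simp
  have lenN: "\<forall>y\<in>N. length y = Suc (length x)" unfolding N_def by auto
  have disj: "D \<inter> N = {}" using lmax lenN by fastforce
  have cD': "card D' = card D + card N" unfolding D'_def using card_Un_disjoint[OF fin finN disj] .
  have finD': "finite D'" unfolding D'_def using fin finN by simp
  have tvx: "tvert d x" using tv xD by simp
  have tvN: "\<forall>y\<in>N. tvert d y" unfolding N_def A_def using tvert_snocI[OF tvx] xne by auto
  have adjN: "\<forall>y\<in>N. tadj d x y \<and> tadj d y x" using tvN tvx unfolding N_def tadj_def by blast
  let ?E = "{(u, v). u \<in> D \<and> v \<in> D \<and> tadj d u v}"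
  let ?E' = "{(u, v). u \<in> D' \<and> v \<in> D' \<and> tadj d u v}"
  have Esub: "?E \<subseteq> ?E'" unfolding D'_def by auto
  have c1: "(u, x) \<in> ?E'\<^sup>* \<and> (x, u) \<in> ?E'\<^sup>*" if "u \<in> D'" for u
  proof (cases "u \<in> D")
    case True
    then show ?thesis using con xD rtrancl_mono[OF Esub] by blast
  next
    case False
    then have "u \<in> N" using that unfolding D'_def by auto
    then have "(u, x) \<in> ?E'" "(x, u) \<in> ?E'" using adjN xD unfolding D'_def by auto
    then show ?thesis by auto
  qed
  have con': "\<forall>u\<in>D'. \<forall>v\<in>D'. (u, v) \<in> ?E'\<^sup>*"
    using c1 by (meson rtrancl_trans)
  have dom': "is_domain d D'" unfolding is_domain_def
    using finD' con' tv tvN xD unfolding D'_def by auto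
  have mono: "degD d D z \<le> degD d D' z" for z
    unfolding degD_def by (rule card_mono) (use finD' in \<open>auto simp: D'_def\<close>)
  have isub: "D - bdry d D \<subseteq> D' - bdry d D'"
  proof
    fix z assume "z \<in> D - bdry d D"
    then have zD: "z \<in> D" and "\<not> degD d D z < d" unfolding bdry_def by auto
    then have "\<not> degD d D' z < d" using mono[of z] by linarith
    then show "z \<in> D' - bdry d D'" using zD unfolding bdry_def D'_def by auto
  qed
  have pN: "butlast x \<notin> N" using lenN by auto
  have "insert (butlast x) N \<subseteq> {y \<in> D'. tadj d x y}"
  proof -
    have "tadj d x (butlast x)" using tvx tv pD xne unfolding tadj_def
      by (metis append_butlast_last_id)
    then show ?thesis using adjN pD unfolding D'_def by auto
  qed
  then have "card (insert (butlast x) N) \<le> degD d D' x"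
    unfolding degD_def by (rule card_mono[rotated]) (use finD' in auto)
  moreover have "card (insert (butlast x) N) = d" using pN finN cN d by simp
  ultimately have xint: "x \<in> D' - bdry d D'" unfolding bdry_def D'_def using xD by auto
  have "{y \<in> D. tadj d x y} \<subseteq> {butlast x}"
  proof
    fix y assume "y \<in> {y \<in> D. tadj d x y}"
    then have yD: "y \<in> D" and "\<exists>a. y = x @ [a] \<or> x = y @ [a]" unfolding tadj_def by auto
    then obtain a where "y = x @ [a] \<or> x = y @ [a]" by blast
    moreover have "length y \<le> length x" using lmax yD by blast
    ultimately have "x = y @ [a]" by auto
    then show "y \<in> {butlast x}" by simp
  qed
  then have "card {y \<in> D. tadj d x y} \<le> card {butlast x}" by (intro card_mono) auto
  then have "degD d D x \<le> 1" unfolding degD_def by simp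
  then have xnot: "x \<notin> D - bdry d D" unfolding bdry_def using d xD by auto
  have "card (insert x (D - bdry d D)) \<le> card (D' - bdry d D')"
    by (rule card_mono) (use finD' xint isub in auto)
  moreover have "card (insert x (D - bdry d D)) = Suc (card (D - bdry d D))"
    using xnot fin by simp
  ultimately have jI': "Suc j \<le> card (D' - bdry d D')" using jI by simp
  define b where "b = (if last x = 0 then 1 else (0::nat))"
  have "b \<in> A" unfolding A_def b_def using d by auto
  then have x'N: "x @ [b] \<in> N" unfolding N_def by auto
  have "card D' = 2 + Suc j * (d - 1)" using cD' cD cN by simp
  moreover have "x @ [b] \<in> D'" using x'N unfolding D'_def by auto
  moreover have "butlast (x @ [b]) \<in> D'" using xD unfolding D'_def by auto
  moreover have "\<forall>y\<in>D'. length y \<le> length (x @ [b])"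
    using lmax lenN unfolding D'_def by fastforce
  ultimately show ?case using dom' jI' by blast
qed


lemma bdry_card:
  assumes "is_domain d D"
  shows "card (bdry d D) + card (D - bdry d D) = card D"
proof -
  have fin: "finite D" using assms unfolding is_domain_def by auto
  have "bdry d D \<subseteq> D" unfolding bdry_def by auto
  moreover have "finite (bdry d D)" using fin \<open>bdry d D \<subseteq> D\<close> finite_subset by blast
  ultimately have "card (D - bdry d D) = card D - card (bdry d D)" "card (bdry d D) \<le> card D"
    using fin card_Diff_subset card_mono by blast+
  then show ?thesis by simp
qed

theorem mainTheorem11:
  fixes d :: nat and D :: "nat list set"
  assumes "d \<ge> 2" and "is_domain d D" and "card D \<ge> 2"
    and "card D mod (d - 1) = 2 mod (d - 1)"
  shows "optimal d D \<longleftrightarrow> full d D"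
proof -
  define k where "k = card D"
  have "(d - 1) dvd (k - 2)" using assms(3,4) mod_eq_dvd_iff_nat unfolding k_def by blast
  then obtain q where kq: "k - 2 = (d - 1) * q" by blast
  have m: "d - 1 > 0" using assms(1) by simp
  have lower: "k - q \<le> card (bdry d D')" if D': "is_domain d D'" "card D' = k" for D'
  proof -
    have "k - 2 = (d - 1) * card (D' - bdry d D') + sum (\<lambda>x. degD d D' x - 1) (bdry d D')"
      using count_lemma(1)[OF assms(1) D'(1)] D'(2) assms(3) unfolding k_def by simp
    then have "(d - 1) * card (D' - bdry d D') \<le> (d - 1) * q" using kq by linarith
    then have "card (D' - bdry d D') \<le> q" using m by simp
    then show ?thesis using bdry_card[OF D'(1)] D'(2) by linarith
  qed
  define S where "S = {card (bdry d D') | D'. is_domain d D' \<and> card D' = k}"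
  have Sfin: "finite S"
  proof (rule finite_subset)
    show "S \<subseteq> {..k}"
    proof
      fix n assume "n \<in> S"
      then obtain D' where "n = card (bdry d D')" "is_domain d D'" "card D' = k" unfolding S_def by blast
      then show "n \<in> {..k}" using bdry_card[of d D'] by simp
    qed
  qed simp
  have DS: "card (bdry d D) \<in> S" unfolding S_def k_def using assms(2) by blast
  have Sne: "S \<noteq> {}" using DS by blast
  have Iso_ge: "k - q \<le> Iso d k"
    unfolding Iso_def S_def[symmetric] using Sfin Sne lower unfolding S_def by (auto simp: Min_ge_iff)
  obtain D' x where D': "is_domain d D'" "card D' = 2 + q * (d - 1)" "q \<le> card (D' - bdry d D')"
    using construct[OF assms(1), of q] by blast
  have cD': "card D' = k" using D'(2) kq assms(3) unfolding k_def by (simp add: mult.commute)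
  have "card (bdry d D') \<le> k - q" using bdry_card[OF D'(1)] cD' D'(3) by linarith
  moreover have "card (bdry d D') \<in> S" unfolding S_def using D'(1) cD' by blast
  ultimately have "Iso d k \<le> k - q" unfolding Iso_def S_def[symmetric] using Sfin
    by (meson Min_le le_trans)
  then have Iso: "Iso d k = k - q" using Iso_ge by simp
  have eq: "k - 2 = (d - 1) * card (D - bdry d D) + sum (\<lambda>x. degD d D x - 1) (bdry d D)"
    using count_lemma(1)[OF assms(1,2,3)] unfolding k_def by simp
  have bc: "card (bdry d D) + card (D - bdry d D) = k" using bdry_card[OF assms(2)] unfolding k_def by simp
  have "optimal d D \<longleftrightarrow> card (D - bdry d D) = q"
  proof -
    have "optimal d D \<longleftrightarrow> card (bdry d D) = k - q" unfolding optimal_def k_def[symmetric] Iso by simp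
    also have "\<dots> \<longleftrightarrow> card (D - bdry d D) = q"
    proof -
      have "(d - 1) * card (D - bdry d D) \<le> (d - 1) * q" using eq kq by linarith
      then have "card (D - bdry d D) \<le> q" using m by simp
      moreover have "1 * q \<le> (d - 1) * q" using m by (intro mult_le_mono1) simp
      moreover have "q \<le> (d - 1) * q" using calculation(2) by simp
      ultimately show ?thesis using bc kq by (intro iffI) linarith+
    qed
    finally show ?thesis .
  qed
  also have "\<dots> \<longleftrightarrow> sum (\<lambda>x. degD d D x - 1) (bdry d D) = 0"
  proof
    assume "card (D - bdry d D) = q"
    then show "sum (\<lambda>x. degD d D x - 1) (bdry d D) = 0" using eq kq by simp
  next
    assume "sum (\<lambda>x. degD d D x - 1) (bdry d D) = 0"
    then have "(d - 1) * card (D - bdry d D) = (d - 1) * q" using eq kq by linarith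
    then show "card (D - bdry d D) = q" using m by simp
  qed
  also have "\<dots> \<longleftrightarrow> full d D" using count_lemma(2)[OF assms(1,2,3)] by simp
  finally show ?thesis .
qed

end
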